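(* Let $h$ and $k$ be odd positive integers with $\gcd(h,k)=1$. Then $$kB_{1}(h,k)+hB_{1}(k,h)=\frac{1}{2}(h-1)(k-1).$$
   Context: $[x]$ denotes the greatest integer $\le x$. For integers $a,b$ with $b>0$ and $\gcd(a,b)=1$, define $$B_{1}(a,b)=\sum_{j=1}^{b-1}(-1)^{j+\left[\frac{aj}{b}\right]}\left[\frac{aj}{b}\right].$$ *)

theory Defs
  imports Complex_Main
begin

definition B1 :: "int \<Rightarrow> int \<Rightarrow> int" where
  "B1 a b = (\<Sum>j=1..b-1. (if even (j + (a*j) div b) then 1 else -1) * ((a*j) div b))"

end

theory Submission
  imports Defs
begin

definition sg :: "int \<Rightarrow> int" where "sg x = (if even x then 1 else -1)"

lemma sg_sum_aux: "(\<Sum>a\<in>{0..2*int t}. sg a) = 1 \<and> 2 * (\<Sum>a\<in>{1..2*int t}. sg a * a) = 2 * int t"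
proof (induction t)
  case 0
  then show ?case by (simp add: sg_def)
next
  case (Suc t)
  have e1: "{0..2*int (Suc t)} = insert (2*int t + 2) (insert (2*int t+1) {0..2*int t})" by auto
  have e2: "{1..2*int (Suc t)} = insert (2*int t + 2) (insert (2*int t+1) {1..2*int t})" by auto
  show ?case using Suc unfolding e1 e2 by (simp add: sg_def)
qed

lemma sg_sum1: assumes "odd h" "h > 0" shows "(\<Sum>a\<in>{0..h-1}. sg a) = 1"
proof -
  have "h = 2*int (nat (h div 2)) + 1" using assms by simp
  then obtain t where "h = 2*int t + 1" by blast
  then show ?thesis using sg_sum_aux[of t] by simp
qed

lemma sg_sum2: assumes "odd h" "h > 0" shows "2 * (\<Sum>a\<in>{1..h-1}. sg a * a) = h - 1"
proof -
  have "h = 2*int (nat (h div 2)) + 1" using assms by simp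
  then obtain t where "h = 2*int t + 1" by blast
  then show ?thesis using sg_sum_aux[of t] by simp
qed

lemma parity: assumes "odd h" "odd k" "k > 0"
  shows "sg (j + (h*j) div k) = sg ((h*j) mod k)"
proof -
  obtain a where a: "h = 2*a+1" using assms by (metis oddE)
  obtain b where b: "k = 2*b+1" using assms by (metis oddE)
  have d: "h*j = k*((h*j) div k) + (h*j) mod k" by simp
  have "even (j + (h*j) div k) \<longleftrightarrow> even ((h*j) mod k)"
  proof -
    have "(h*j) mod k = 2*(a*j - b*((h*j) div k)) + j - (h*j) div k"
      using d a b by (simp add: algebra_simps)
    then show ?thesis by (metis even_add even_diff even_mult_iff even_numeral)
  qed
  then show ?thesis by (simp add: sg_def)
qed

lemma small_dvd: fixes d k :: int assumes "k dvd d" "\<bar>d\<bar> < k" shows "d = 0"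
proof (rule ccontr)
  assume "d \<noteq> 0"
  then have "\<bar>k\<bar> \<le> \<bar>d\<bar>" using dvd_imp_le_int assms(1) by blast
  then show False using assms(2) by linarith
qed

lemma mod_bij: fixes h k :: int assumes "k > 0" "coprime h k"
  shows "bij_betw (\<lambda>j. (h*j) mod k) {1..k-1} {1..k-1}"
proof -
  have inj: "inj_on (\<lambda>j. (h*j) mod k) {1..k-1}"
  proof (rule inj_onI)
    fix x y assume x: "x \<in> {1..k-1}" and y: "y \<in> {1..k-1}" and e: "(h*x) mod k = (h*y) mod k"
    have "k dvd h*x - h*y" using e by (simp add: mod_eq_dvd_iff)
    then have "k dvd h*(x-y)" by (simp add: right_diff_distrib)
    then have "k dvd (x-y)" using assms coprime_commute coprime_dvd_mult_right_iff by blast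
    moreover have "\<bar>x-y\<bar> < k" using x y by auto
    ultimately show "x = y" using small_dvd by fastforce
  qed
  have sub: "(\<lambda>j. (h*j) mod k) ` {1..k-1} \<subseteq> {1..k-1}"
  proof
    fix r assume "r \<in> (\<lambda>j. (h*j) mod k) ` {1..k-1}"
    then obtain j where j: "j \<in> {1..k-1}" "r = (h*j) mod k" by blast
    have "\<not> k dvd j" using j by (auto simp: zdvd_not_zless)
    then have "\<not> k dvd h*j" using assms coprime_commute coprime_dvd_mult_right_iff by blast
    then have "r \<noteq> 0" using j by auto
    moreover have "0 \<le> r" "r < k" using j assms by auto
    ultimately show "r \<in> {1..k-1}" by auto
  qed
  show ?thesis unfolding bij_betw_def using inj endo_inj_surj[OF _ sub inj] by auto
qed

definition V :: "int \<Rightarrow> int \<Rightarrow> int" where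
  "V h k = (\<Sum>j\<in>{1..k-1}. sg ((h*j) mod k) * j)"

lemma kB1: fixes h k :: int assumes "k > 0" "odd h" "odd k" "coprime h k"
  shows "2 * (k * B1 h k) = 2 * h * V h k - (k - 1)"
proof -
  have "k * B1 h k = (\<Sum>j\<in>{1..k-1}. sg ((h*j) mod k) * (k * ((h*j) div k)))"
    unfolding B1_def sum_distrib_left
  proof (rule sum.cong)
    fix j
    have "(if even (j + h * j div k) then 1 else -1) = sg ((h*j) mod k)"
      using parity[OF assms(2,3,1), of j] unfolding sg_def by simp
    then show "k * ((if even (j + h * j div k) then 1 else -1) * (h * j div k)) =
      sg ((h*j) mod k) * (k * ((h*j) div k))" by simp
  qed simp
  also have "\<dots> = (\<Sum>j\<in>{1..k-1}. sg ((h*j) mod k) * (h*j) - sg ((h*j) mod k) * ((h*j) mod k))"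
    by (rule sum.cong) (auto simp: minus_mod_eq_mult_div[symmetric] right_diff_distrib)
  also have "\<dots> = h * V h k - (\<Sum>j\<in>{1..k-1}. sg ((h*j) mod k) * ((h*j) mod k))"
    unfolding V_def sum_subtractf sum_distrib_left by (simp add: algebra_simps)
  also have "(\<Sum>j\<in>{1..k-1}. sg ((h*j) mod k) * ((h*j) mod k)) = (\<Sum>r\<in>{1..k-1}. sg r * r)"
    using sum.reindex_bij_betw[OF mod_bij[OF assms(1,4)], of "\<lambda>r. sg r * r"] by simp
  finally show ?thesis using sg_sum2[OF assms(3,1)] by simp
qed

lemma sbp: fixes f :: "int \<Rightarrow> int" assumes "N \<ge> 1"
  shows "(\<Sum>m\<in>{1..N-1}. (f m - f (m-1)) * m) = N * f (N-1) - (\<Sum>n\<in>{0..N-1}. f n)"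
  using assms
proof (induction N rule: int_ge_induct)
  case base
  then show ?case by simp
next
  case (step i)
  have e1: "{1..i+1-1} = insert i {1..i-1}" using step by auto
  have e2: "{0..i+1-1} = insert i {0..i-1}" using step by auto
  show ?case unfolding e1 e2 using step by (simp add: algebra_simps)
qed

lemma crt: fixes h k :: int assumes "h > 0" "k > 0" "coprime h k"
  shows "(\<Sum>n\<in>{0..h*k-1}. sg (n mod h) * sg (n mod k))
       = (\<Sum>a\<in>{0..h-1}. sg a) * (\<Sum>b\<in>{0..k-1}. sg b)"
proof -
  let ?f = "\<lambda>n. (n mod h, n mod k)"
  have inj: "inj_on ?f {0..h*k-1}"
  proof (rule inj_onI)
    fix x y assume x: "x \<in> {0..h*k-1}" and y: "y \<in> {0..h*k-1}" and e: "?f x = ?f y"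
    have "h dvd x - y" "k dvd x - y" using e by (auto simp: mod_eq_dvd_iff)
    then have "h*k dvd x - y" using assms divides_mult by blast
    moreover have "\<bar>x-y\<bar> < h*k" using x y by auto
    ultimately show "x = y" using small_dvd by fastforce
  qed
  have sub: "?f ` {0..h*k-1} \<subseteq> {0..h-1} \<times> {0..k-1}" using assms by auto
  have "card (?f ` {0..h*k-1}) = card ({0..h-1} \<times> {0..k-1})"
    using assms by (simp add: card_image[OF inj] card_cartesian_product nat_mult_distrib)
  then have img: "?f ` {0..h*k-1} = {0..h-1} \<times> {0..k-1}"
    using card_subset_eq[OF _ sub] by simp
  have "(\<Sum>n\<in>{0..h*k-1}. sg (n mod h) * sg (n mod k)) = (\<Sum>p\<in>{0..h-1} \<times> {0..k-1}. sg (fst p) * sg (snd p))"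
    using sum.reindex[OF inj, of "\<lambda>p. sg (fst p) * sg (snd p)"] img by simp
  also have "\<dots> = (\<Sum>a\<in>{0..h-1}. sg a) * (\<Sum>b\<in>{0..k-1}. sg b)"
    by (simp add: sum_product sum.cartesian_product case_prod_beta)
  finally show ?thesis .
qed

lemma mod_pred1: fixes h m :: int assumes "h > 0" "\<not> h dvd m" shows "(m-1) mod h = m mod h - 1"
proof -
  have "m mod h \<noteq> 0" using assms by auto
  then have "m mod h \<ge> 1" using assms by (smt (verit) pos_mod_sign)
  have "(m-1) mod h = (m mod h - 1) mod h" by (simp add: mod_diff_left_eq)
  also have "\<dots> = m mod h - 1" using \<open>m mod h \<ge> 1\<close> assms
    by (smt (verit) mod_pos_pos_trivial pos_mod_bound)
  finally show ?thesis .
qed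

lemma mod_pred2: fixes h m :: int assumes "h > 0" "h dvd m" shows "(m-1) mod h = h - 1"
proof -
  have "(m-1) mod h = (m mod h - 1) mod h" by (simp add: mod_diff_left_eq)
  also have "\<dots> = (-1) mod h" using assms by simp
  also have "\<dots> = h - 1" using assms
    by (smt (verit) mod_add_self2 mod_pos_pos_trivial)
  finally show ?thesis .
qed

lemma sg_pred: "sg (x - 1) = - sg x" by (simp add: sg_def)

lemma step_id: fixes h k m :: int
  assumes "h > 0" "k > 0" "odd h" "odd k" "coprime h k" "1 \<le> m" "m < h*k"
  shows "(sg (m mod h) * sg (m mod k) - sg ((m-1) mod h) * sg ((m-1) mod k)) * m
    = 2 * (if h dvd m then sg (m mod k) * m else 0) + 2 * (if k dvd m then sg (m mod h) * m else 0)"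
proof -
  have sh: "sg (h - 1) = 1" "sg (k-1) = 1" using assms by (auto simp: sg_def)
  have nb: "\<not> (h dvd m \<and> k dvd m)"
  proof
    assume "h dvd m \<and> k dvd m"
    then have "h*k dvd m" using assms divides_mult by blast
    then show False using assms by (auto simp: zdvd_not_zless)
  qed
  show ?thesis
  proof (cases "h dvd m")
    case True
    then have "\<not> k dvd m" using nb by blast
    then show ?thesis using True mod_pred1[of k m] mod_pred2[of h m] assms sh
      by (simp add: sg_pred sg_def)
  next
    case False
    show ?thesis
    proof (cases "k dvd m")
      case True
      then show ?thesis using False mod_pred2[of k m] mod_pred1[of h m] assms sh
        by (simp add: sg_pred sg_def)
    next
      case F2: False
      then show ?thesis using False mod_pred1[of k m] mod_pred1[of h m] assms
        by (simp add: sg_pred)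
    qed
  qed
qed

lemma filter_sum: fixes h k :: int and g :: "int \<Rightarrow> int" assumes "h > 0" "k > 0"
  shows "(\<Sum>m\<in>{1..h*k-1}. (if h dvd m then g m else 0)) = (\<Sum>j\<in>{1..k-1}. g (h*j))"
proof -
  have "(\<Sum>m\<in>{1..h*k-1}. (if h dvd m then g m else 0)) = (\<Sum>m\<in>{m\<in>{1..h*k-1}. h dvd m}. g m)"
    by (rule sum.inter_filter[symmetric]) simp
  also have "{m\<in>{1..h*k-1}. h dvd m} = (\<lambda>j. h*j) ` {1..k-1}"
  proof (intro equalityI subsetI)
    fix m assume "m \<in> {m\<in>{1..h*k-1}. h dvd m}"
    then obtain j where j: "m = h*j" "1 \<le> h*j" "h*j \<le> h*k - 1" by auto
    have "j \<ge> 1" using j assms by (smt (verit) mult_nonpos_nonneg zero_less_mult_iff)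
    moreover have "j < k" using j assms by (smt (verit) mult_le_cancel_left)
    ultimately show "m \<in> (\<lambda>j. h*j) ` {1..k-1}" using j by auto
  next
    fix m assume "m \<in> (\<lambda>j. h*j) ` {1..k-1}"
    then obtain j where j: "m = h*j" "j \<in> {1..k-1}" by blast
    then have j: "m = h*j" "1 \<le> j" "j \<le> k - 1" by auto
    have "h*j \<ge> 1" using j assms by (smt (verit) mult_le_cancel_left1)
    moreover have "h*j \<le> h*(k-1)" using j assms by simp
    ultimately show "m \<in> {m\<in>{1..h*k-1}. h dvd m}" using j assms by (auto simp: algebra_simps)
  qed
  also have "(\<Sum>m\<in>(\<lambda>j. h*j) ` {1..k-1}. g m) = (\<Sum>j\<in>{1..k-1}. g (h*j))"
    by (rule sum.reindex_cong[of "\<lambda>j. h*j"]) (use assms in \<open>auto simp: inj_on_def\<close>)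
  finally show ?thesis .
qed

lemma recip: fixes h k :: int
  assumes "h > 0" "k > 0" "odd h" "odd k" "coprime h k"
  shows "2*h*V h k + 2*k*V k h = h*k - 1"
proof -
  let ?s = "\<lambda>n. sg (n mod h) * sg (n mod k)"
  have N: "h*k \<ge> 1" using assms by (smt (verit) mult_pos_pos)
  have sN: "?s (h*k-1) = 1"
    using mod_pred2[of h "h*k"] mod_pred2[of k "h*k"] assms by (simp add: sg_def)
  have "(\<Sum>m\<in>{1..h*k-1}. (?s m - ?s (m-1)) * m) = h*k * ?s (h*k-1) - (\<Sum>n\<in>{0..h*k-1}. ?s n)"
    by (rule sbp[OF N])
  also have "\<dots> = h*k - 1"
    using sN crt[OF assms(1,2,5)] sg_sum1[OF assms(3,1)] sg_sum1[OF assms(4,2)] by simp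
  finally have A: "(\<Sum>m\<in>{1..h*k-1}. (?s m - ?s (m-1)) * m) = h*k - 1" .
  have "(\<Sum>m\<in>{1..h*k-1}. (?s m - ?s (m-1)) * m) =
     (\<Sum>m\<in>{1..h*k-1}. 2 * (if h dvd m then sg (m mod k) * m else 0) + 2 * (if k dvd m then sg (m mod h) * m else 0))"
    by (rule sum.cong) (use step_id[OF assms] in auto)
  also have "\<dots> = 2 * (\<Sum>m\<in>{1..h*k-1}. (if h dvd m then sg (m mod k) * m else 0))
     + 2 * (\<Sum>m\<in>{1..k*h-1}. (if k dvd m then sg (m mod h) * m else 0))"
    by (simp add: sum.distrib sum_distrib_left mult.commute)
  also have "\<dots> = 2 * (\<Sum>j\<in>{1..k-1}. sg ((h*j) mod k) * (h*j)) + 2 * (\<Sum>j\<in>{1..h-1}. sg ((k*j) mod h) * (k*j))"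
    using filter_sum[OF assms(1,2)] filter_sum[OF assms(2,1)] by simp
  also have "\<dots> = 2*h*V h k + 2*k*V k h"
    unfolding V_def sum_distrib_left by (simp add: algebra_simps)
  finally show ?thesis using A by simp
qed

theorem theorem15:
  fixes h k :: int
  assumes "h > 0" "k > 0" "odd h" "odd k" "gcd h k = 1"
  shows "real_of_int (k * B1 h k + h * B1 k h) = (1/2) * real_of_int ((h - 1) * (k - 1))"
proof -
  have c: "coprime h k" "coprime k h" using assms(5) by (auto simp: coprime_iff_gcd_eq_1 gcd.commute)
  have "2 * (k * B1 h k + h * B1 k h) = (h-1)*(k-1)"
    using kB1[OF assms(2,3,4) c(1)] kB1[OF assms(1,4,3) c(2)] recip[OF assms(1-4) c(1)]
    by (simp add: algebra_simps)
  then have "real_of_int (2 * (k * B1 h k + h * B1 k h)) = real_of_int ((h-1)*(k-1))" by simp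
  then show ?thesis by simp
qed

end
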